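(* Let $k\ge0$ and let $\lambda=(\lambda_1,\dots,\lambda_r)$ be a $k$-strict partition of length $r$ with characteristic index $\chi$. Let $r'$ be the smallest even integer $\ge r$. Then, as rational functions in $t_1,\dots,t_r$ over $\mathbb Z[\beta]$, \[ t_1^{\lambda_1}\cdots t_r^{\lambda_r}\frac{\prod_{1\le i<j\le r}(1-\bar t_i/\bar t_j)}{\prod_{(i,j)\in C(\lambda)_r}(1-t_i/\bar t_j)}=\sum_{I\subset D(\lambda)_r}\operatorname{Pf}\big(\Lambda^I_{i,j}(t)\big)_{1\le i<j\le r'}, \] where $\Lambda^I_{i,j}(t)=t_i^{\lambda_i+d_i^I}t_j^{\lambda_j+d_j^I}F^I_{i,j}(t)$ for $1\le i<j\le r$, and, when $r$ is odd (so $r'=r+1$), $\Lambda^I_{i,r+1}(t)=t_i^{\lambda_i+d_i^I}F^I_i(t)$ for $1\le i\le r$.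
   Context: A partition $\lambda=(\lambda_1\ge\lambda_2\ge\cdots\ge0)$ is $k$-strict if $\lambda_i>k$ implies $\lambda_i>\lambda_{i+1}$. Its characteristic index is $\chi_j=\#\{i:1\le i<j,\ \lambda_i+\lambda_j>2k+j-i\}+\lambda_j-k-j$ (for all $j\ge1$, with $\lambda_j=0$ for $j>r$); one has $\chi_i+\chi_j\ge0\iff\lambda_i+\lambda_j>2k+j-i$ for $i<j$. Set $\Delta_r=\{(i,j):1\le i<j\le r\}$, $C(\lambda)_r=\{(i,j)\in\Delta_r:\chi_i+\chi_j\ge0\}$, $D(\lambda)_r=\Delta_r\setminus C(\lambda)_r$. For $I\subset\Delta_r$: $a_i^I=\#\{j:(i,j)\in I\}$, $c_j^I=\#\{i:(i,j)\in I\}$, $d_i^I=a_i^I-c_i^I$. Notation: $\bar t=-t/(1+\beta t)$. Define \[ F^I_{i,j}(t)=\frac{1}{(1+\beta t_i)^{r'-i-c_i^I-1}}\frac{1}{(1+\beta t_j)^{r'-j-c_j^I}}\frac{1-\bar t_i/\bar t_j}{1-t_i/\bar t_j},\qquad F^I_i(t)=\frac{1}{(1+\beta t_i)^{r'-i-c_i^I-1}}. \] $\operatorname{Pf}$ is the Pfaffian of the skew-symmetric $r'\times r'$ matrix with the given entries above the diagonal. *)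

theory Defs
  imports Complex_Main
begin

text \<open>Partitions are encoded as functions lam :: nat => nat, indexed from 1,
  with lam i = 0 for i > r.\<close>

definition is_partition_of_length :: "(nat \<Rightarrow> nat) \<Rightarrow> nat \<Rightarrow> bool" where
  "is_partition_of_length lam r \<longleftrightarrow>
     (\<forall>i. 1 \<le> i \<longrightarrow> lam (Suc i) \<le> lam i) \<and>
     (\<forall>i. 1 \<le> i \<and> i \<le> r \<longrightarrow> 0 < lam i) \<and>
     (\<forall>i. r < i \<longrightarrow> lam i = 0)"

definition k_strict :: "nat \<Rightarrow> (nat \<Rightarrow> nat) \<Rightarrow> bool" where
  "k_strict k lam \<longleftrightarrow> (\<forall>i. 1 \<le> i \<longrightarrow> lam i > k \<longrightarrow> lam i > lam (Suc i))"

definition char_index :: "nat \<Rightarrow> (nat \<Rightarrow> nat) \<Rightarrow> nat \<Rightarrow> int" where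
  "char_index k lam j =
     int (card {i. 1 \<le> i \<and> i < j \<and> int (lam i) + int (lam j) > 2 * int k + int j - int i})
     + int (lam j) - int k - int j"

definition Delta :: "nat \<Rightarrow> (nat \<times> nat) set" where
  "Delta r = {(i, j). 1 \<le> i \<and> i < j \<and> j \<le> r}"

definition Cset :: "nat \<Rightarrow> (nat \<Rightarrow> nat) \<Rightarrow> nat \<Rightarrow> (nat \<times> nat) set" where
  "Cset k lam r = {(i, j) \<in> Delta r. char_index k lam i + char_index k lam j \<ge> 0}"

definition Dset :: "nat \<Rightarrow> (nat \<Rightarrow> nat) \<Rightarrow> nat \<Rightarrow> (nat \<times> nat) set" where
  "Dset k lam r = Delta r - Cset k lam r"

definition a_I :: "(nat \<times> nat) set \<Rightarrow> nat \<Rightarrow> nat" where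
  "a_I I i = card {j. (i, j) \<in> I}"

definition c_I :: "(nat \<times> nat) set \<Rightarrow> nat \<Rightarrow> nat" where
  "c_I I j = card {i. (i, j) \<in> I}"

definition d_I :: "(nat \<times> nat) set \<Rightarrow> nat \<Rightarrow> int" where
  "d_I I i = int (a_I I i) - int (c_I I i)"

definition tbar :: "'a::field \<Rightarrow> 'a \<Rightarrow> 'a" where
  "tbar \<beta> x = - x / (1 + \<beta> * x)"

definition rprime :: "nat \<Rightarrow> nat" where
  "rprime r = (if even r then r else r + 1)"

definition F2 :: "'a::field \<Rightarrow> (nat \<Rightarrow> 'a) \<Rightarrow> nat \<Rightarrow> (nat \<times> nat) set \<Rightarrow> nat \<Rightarrow> nat \<Rightarrow> 'a" where
  "F2 \<beta> t r I i j =
     1 / ((1 + \<beta> * t i) powi (int (rprime r) - int i - int (c_I I i) - 1))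
     * (1 / ((1 + \<beta> * t j) powi (int (rprime r) - int j - int (c_I I j))))
     * ((1 - tbar \<beta> (t i) / tbar \<beta> (t j)) / (1 - t i / tbar \<beta> (t j)))"

definition F1 :: "'a::field \<Rightarrow> (nat \<Rightarrow> 'a) \<Rightarrow> nat \<Rightarrow> (nat \<times> nat) set \<Rightarrow> nat \<Rightarrow> 'a" where
  "F1 \<beta> t r I i =
     1 / ((1 + \<beta> * t i) powi (int (rprime r) - int i - int (c_I I i) - 1))"

definition LambdaI :: "'a::field \<Rightarrow> (nat \<Rightarrow> 'a) \<Rightarrow> (nat \<Rightarrow> nat) \<Rightarrow> nat \<Rightarrow> (nat \<times> nat) set
    \<Rightarrow> nat \<Rightarrow> nat \<Rightarrow> 'a" where
  "LambdaI \<beta> t lam r I i j =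
     (if j \<le> r then
        t i powi (int (lam i) + d_I I i) * t j powi (int (lam j) + d_I I j) * F2 \<beta> t r I i j
      else t i powi (int (lam i) + d_I I i) * F1 \<beta> t r I i)"

text \<open>Pfaffian of the skew-symmetric matrix on the index list xs (increasing),
  whose above-diagonal entries are A i j; expansion along the first row:
  Pf = sum_j (-1)^j a_{1j} Pf(A without rows/cols 1, j).\<close>
function pf :: "(nat \<Rightarrow> nat \<Rightarrow> 'a::comm_ring_1) \<Rightarrow> nat list \<Rightarrow> 'a" where
  "pf A [] = 1"
| "pf A (i # rest) =
     (\<Sum>k<length rest. (-1) ^ k * A i (rest ! k) * pf A (take k rest @ drop (Suc k) rest))"
  by pat_completeness auto
termination
  by (relation "measure (\<lambda>(A, xs). length xs)") auto

definition pfaffian :: "nat \<Rightarrow> (nat \<Rightarrow> nat \<Rightarrow> 'a::comm_ring_1) \<Rightarrow> 'a" where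
  "pfaffian n A = pf A [1..<Suc n]"

end

theory Submission
  imports Defs "HOL-Computational_Algebra.Polynomial"
begin

definition pfs :: "(nat \<Rightarrow> nat \<Rightarrow> 'a::comm_ring_1) \<Rightarrow> nat set \<Rightarrow> 'a" where
  "pfs A S = pf A (sorted_list_of_set S)"

lemma take_drop_set:
  assumes "distinct xs" "k < length xs"
  shows "set (take k xs @ drop (Suc k) xs) = set xs - {xs ! k}"
proof -
  have e: "xs = take k xs @ xs ! k # drop (Suc k) xs" using assms(2) by (simp add: id_take_nth_drop)
  have "distinct (take k xs @ xs ! k # drop (Suc k) xs)" using assms(1) e by metis
  then have "xs ! k \<notin> set (take k xs @ drop (Suc k) xs)" by auto
  moreover have "set xs = insert (xs!k) (set (take k xs @ drop (Suc k) xs))"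
    by (subst e) auto
  ultimately show ?thesis by auto
qed

lemma card_less_nth:
  fixes xs :: "nat list"
  assumes "sorted_wrt (<) xs" "k < length xs"
  shows "card {j \<in> set xs. j < xs ! k} = k"
proof -
  have "{j \<in> set xs. j < xs ! k} = (nth xs) ` {..<k}"
  proof safe
    fix j assume "j \<in> set xs" "j < xs ! k"
    then obtain i where i: "i < length xs" "j = xs ! i" by (auto simp: in_set_conv_nth)
    have "i < k"
    proof (rule ccontr)
      assume "\<not> i < k"
      then have "i = k \<or> k < i" by auto
      then show False
      proof
        assume "i = k" then show False using i \<open>j < xs!k\<close> by auto
      next
        assume "k < i" then have "xs!k < xs!i" using assms i by (simp add: sorted_wrt_iff_nth_less)
        then show False using i \<open>j < xs!k\<close> by simp
      qed
    qed
    then show "j \<in> (nth xs) ` {..<k}" using i by auto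
  qed (use assms in \<open>auto simp: sorted_wrt_iff_nth_less\<close>)
  moreover have "inj_on (nth xs) {..<k}"
    using assms sorted_wrt_iff_nth_less[of "(<)" xs] unfolding inj_on_def
    by (metis lessThan_iff linorder_neqE_nat order_less_irrefl order.strict_trans)
  ultimately show ?thesis by (simp add: card_image)
qed

lemma take_filter_lemma:
  assumes "distinct xs" "k < length xs"
  shows "take k xs @ drop (Suc k) xs = filter (\<lambda>y. y \<noteq> xs!k) xs"
proof -
  have e: "xs = take k xs @ xs ! k # drop (Suc k) xs" using assms(2) by (simp add: id_take_nth_drop)
  have "distinct (take k xs @ xs ! k # drop (Suc k) xs)" using assms(1) by (simp only: id_take_nth_drop[OF assms(2), symmetric])
  then have a: "xs ! k \<notin> set (take k xs)" "xs ! k \<notin> set (drop (Suc k) xs)" by auto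
  have "filter (\<lambda>y. y \<noteq> xs!k) xs = filter (\<lambda>y. y \<noteq> xs!k) (take k xs @ xs ! k # drop (Suc k) xs)"
    by (simp only: id_take_nth_drop[OF assms(2), symmetric])
  also have "\<dots> = take k xs @ drop (Suc k) xs"
  proof -
    have "filter (\<lambda>y. y \<noteq> xs!k) (take k xs) = take k xs" using a(1) by (metis (mono_tags) filter_id_conv)
    moreover have "filter (\<lambda>y. y \<noteq> xs!k) (drop (Suc k) xs) = drop (Suc k) xs" using a(2) by (metis (mono_tags) filter_id_conv)
    ultimately show ?thesis by simp
  qed
  finally show ?thesis by simp
qed

lemma pfs_insert:
  assumes "finite S" "\<forall>y\<in>S. x < y"
  shows "pfs A (insert x S) = (\<Sum>y\<in>S. (-1) ^ card {j\<in>S. j < y} * A x y * pfs A (S - {y}))"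
proof -
  define R where "R = sorted_list_of_set S"
  have xS: "x \<notin> S" using assms by auto
  have mn: "Min (insert x S) = x" using assms by (auto intro!: Min_eqI)
  have "sorted_list_of_set (insert x S) = x # R"
    using sorted_list_of_set_nonempty[of "insert x S"] assms xS mn unfolding R_def by auto
  then have "pfs A (insert x S) = (\<Sum>k<length R. (-1) ^ k * A x (R ! k) * pf A (take k R @ drop (Suc k) R))"
    by (simp add: pfs_def)
  also have "\<dots> = (\<Sum>k<length R. (-1) ^ card {j\<in>S. j < R!k} * A x (R ! k) * pfs A (S - {R!k}))"
  proof (rule sum.cong[OF refl])
    fix k assume k: "k \<in> {..<length R}"
    have sR: "sorted_wrt (<) R" "set R = S" "distinct R" using assms(1) unfolding R_def by auto
    have "take k R @ drop (Suc k) R = filter (\<lambda>y. y \<noteq> R!k) R"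
      using take_filter_lemma[of R k] sR k by auto
    also have "\<dots> = sorted_list_of_set (S - {R!k})"
    proof (rule sorted_distinct_set_unique)
      show "sorted (filter (\<lambda>y. y \<noteq> R!k) R)"
      proof -
        have "sorted R" using sR(1) strict_sorted_iff by blast
        then show ?thesis by (rule sorted_wrt_filter)
      qed
    qed (use sR assms(1) in auto)
    finally have "take k R @ drop (Suc k) R = sorted_list_of_set (S - {R!k})" .
    moreover have "card {j\<in>S. j < R!k} = k" using card_less_nth[of R k] sR k by auto
    ultimately show "(-1) ^ k * A x (R ! k) * pf A (take k R @ drop (Suc k) R) =
      (-1) ^ card {j\<in>S. j < R!k} * A x (R ! k) * pfs A (S - {R!k})" by (simp add: pfs_def)
  qed
  also have "\<dots> = (\<Sum>y\<in>S. (-1) ^ card {j\<in>S. j < y} * A x y * pfs A (S - {y}))"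
  proof -
    have "bij_betw (nth R) {..<length R} S"
      unfolding R_def using assms(1)
      by (metis bij_betw_nth distinct_sorted_list_of_set lessThan_atLeast0 set_sorted_list_of_set)
    then show ?thesis
      by (rule sum.reindex_bij_betw)
  qed
  finally show ?thesis .
qed

lemma pfs_empty[simp]: "pfs A {} = 1" by (simp add: pfs_def)

lemma pfaffian_pfs: "pfaffian n A = pfs A {1..n}"
  unfolding pfaffian_def pfs_def
  by (metis atLeastLessThanSuc_atLeastAtMost sorted_list_of_set_range)


lemma pfs_min:
  assumes "finite S" "S \<noteq> {}"
  shows "pfs A S = (\<Sum>y\<in>S-{Min S}. (-1) ^ card {j\<in>S-{Min S}. j < y} * A (Min S) y * pfs A (S - {Min S} - {y}))"
proof -
  have mi: "Min S \<in> S" using assms by (simp add: Min_in)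
  then have "S = insert (Min S) (S - {Min S})" by auto
  moreover have "\<forall>y\<in>S-{Min S}. Min S < y"
  proof
    fix y assume "y \<in> S - {Min S}"
    moreover then have "Min S \<le> y" using assms(1) by (simp add: Min_le)
    ultimately show "Min S < y" by auto
  qed
  ultimately show ?thesis using pfs_insert[of "S - {Min S}" "Min S" A] assms(1)
    by (metis finite_Diff)
qed

lemma pfs_cong:
  assumes "finite S" "\<forall>i\<in>S. \<forall>j\<in>S. i < j \<longrightarrow> A i j = B i j"
  shows "pfs A S = pfs B S"
  using assms
proof (induction "card S" arbitrary: S rule: less_induct)
  case less
  show ?case
  proof (cases "S = {}")
    case True then show ?thesis by simp
  next
    case False
    have m: "Min S \<in> S" using False less.prems by auto
    have "pfs A S = (\<Sum>y\<in>S-{Min S}. (-1) ^ card {j\<in>S-{Min S}. j < y} * A (Min S) y * pfs A (S - {Min S} - {y}))"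
      using pfs_min less.prems False by blast
    also have "\<dots> = (\<Sum>y\<in>S-{Min S}. (-1) ^ card {j\<in>S-{Min S}. j < y} * B (Min S) y * pfs B (S - {Min S} - {y}))"
    proof (rule sum.cong[OF refl])
      fix y assume y: "y \<in> S - {Min S}"
      have "Min S \<le> y" using y less.prems(1) by (simp add: Min_le)
      then have lt: "Min S < y" using y by auto
      have "pfs A (S - {Min S} - {y}) = pfs B (S - {Min S} - {y})"
        apply (rule less.hyps)
        apply (rule psubset_card_mono)
        using less.prems y m by auto
      then show "(-1) ^ card {j\<in>S-{Min S}. j < y} * A (Min S) y * pfs A (S - {Min S} - {y}) =
        (-1) ^ card {j\<in>S-{Min S}. j < y} * B (Min S) y * pfs B (S - {Min S} - {y})"
        using less.prems(2) m y lt by auto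
    qed
    also have "\<dots> = pfs B S" using pfs_min[of S B] less.prems False by simp
    finally show ?thesis .
  qed
qed

lemma pfs_scale:
  assumes "finite S"
  shows "pfs (\<lambda>i j. s i * s j * A i j) S = (\<Prod>i\<in>S. s i) * pfs A S"
  using assms
proof (induction "card S" arbitrary: S rule: less_induct)
  case less
  show ?case
  proof (cases "S = {}")
    case True then show ?thesis by simp
  next
    case False
    let ?m = "Min S"
    have m: "?m \<in> S" using False less.prems by auto
    have "pfs (\<lambda>i j. s i * s j * A i j) S = (\<Sum>y\<in>S-{?m}. (-1) ^ card {j\<in>S-{?m}. j < y} * (s ?m * s y * A ?m y) * pfs (\<lambda>i j. s i * s j * A i j) (S - {?m} - {y}))"
      using pfs_min less.prems False by blast
    also have "\<dots> = (\<Sum>y\<in>S-{?m}. (\<Prod>i\<in>S. s i) * ((-1) ^ card {j\<in>S-{?m}. j < y} * A ?m y * pfs A (S - {?m} - {y})))"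
    proof (rule sum.cong[OF refl])
      fix y assume y: "y \<in> S - {?m}"
      have "pfs (\<lambda>i j. s i * s j * A i j) (S - {?m} - {y}) = (\<Prod>i\<in>S - {?m} - {y}. s i) * pfs A (S - {?m} - {y})"
        apply (rule less.hyps)
        apply (rule psubset_card_mono)
        using less.prems y m by auto
      moreover have "(\<Prod>i\<in>S. s i) = s ?m * s y * (\<Prod>i\<in>S - {?m} - {y}. s i)"
      proof -
        have "(\<Prod>i\<in>S. s i) = s ?m * (\<Prod>i\<in>S - {?m}. s i)" using less.prems m by (simp add: prod.remove)
        also have "(\<Prod>i\<in>S - {?m}. s i) = s y * (\<Prod>i\<in>S - {?m} - {y}. s i)"
          using less.prems y by (intro prod.remove) auto
        finally show ?thesis by (simp add: mult.assoc)
      qed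
      ultimately show "(-1) ^ card {j\<in>S-{?m}. j < y} * (s ?m * s y * A ?m y) * pfs (\<lambda>i j. s i * s j * A i j) (S - {?m} - {y}) =
        (\<Prod>i\<in>S. s i) * ((-1) ^ card {j\<in>S-{?m}. j < y} * A ?m y * pfs A (S - {?m} - {y}))"
        by (simp add: algebra_simps)
    qed
    also have "\<dots> = (\<Prod>i\<in>S. s i) * pfs A S"
      using pfs_min[of S A] less.prems False by (simp add: sum_distrib_left)
    finally show ?thesis .
  qed
qed

definition Pairs :: "nat set \<Rightarrow> (nat \<times> nat) set" where
  "Pairs S = {(i, j). i \<in> S \<and> j \<in> S \<and> i < j}"

definition PiS :: "(nat \<Rightarrow> nat \<Rightarrow> 'a::comm_ring_1) \<Rightarrow> nat set \<Rightarrow> 'a" where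
  "PiS A S = (\<Prod>(i, j)\<in>Pairs S. A i j)"

lemma finite_Pairs: "finite S \<Longrightarrow> finite (Pairs S)"
  unfolding Pairs_def by (rule finite_subset[of _ "S \<times> S"]) auto

lemma PiS_rel:
  assumes "finite S" "y \<in> S" "\<forall>i\<in>S. \<forall>j\<in>S. A j i = - A i j"
  shows "PiS A S = PiS A (S - {y}) * (-1) ^ card {j\<in>S. j < y} * (\<Prod>j\<in>S-{y}. A y j)"
proof -
  let ?L = "{j\<in>S. j < y}" and ?U = "{j\<in>S. y < j}"
  have P: "Pairs S = Pairs (S - {y}) \<union> ((\<lambda>j. (j, y)) ` ?L \<union> (\<lambda>j. (y, j)) ` ?U)"
    unfolding Pairs_def using assms(2) by auto
  have fin: "finite (Pairs (S - {y}))" "finite ?L" "finite ?U" using assms(1) finite_Pairs by auto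
  have 1: "PiS A S = PiS A (S - {y}) * ((\<Prod>p\<in>(\<lambda>j. (j, y)) ` ?L. case p of (i, j) \<Rightarrow> A i j) * (\<Prod>p\<in>(\<lambda>j. (y, j)) ` ?U. case p of (i, j) \<Rightarrow> A i j))"
    unfolding PiS_def P
    apply (subst prod.union_disjoint)
    using fin apply (auto simp: Pairs_def)[3]
    apply (subst prod.union_disjoint)
    using fin apply auto
    done
  have "(\<Prod>p\<in>(\<lambda>j. (j, y)) ` ?L. case p of (i, j) \<Rightarrow> A i j) = (\<Prod>j\<in>?L. A j y)"
    by (subst prod.reindex) (auto simp: inj_on_def)
  also have "\<dots> = (\<Prod>j\<in>?L. - A y j)"
  proof (rule prod.cong[OF refl])
    fix j assume "j \<in> ?L" then show "A j y = - A y j" using assms(2,3) by blast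
  qed
  also have "\<dots> = (-1) ^ card ?L * (\<Prod>j\<in>?L. A y j)" by (rule prod_uminus)
  finally have 2: "(\<Prod>p\<in>(\<lambda>j. (j, y)) ` ?L. case p of (i, j) \<Rightarrow> A i j) = (-1) ^ card ?L * (\<Prod>j\<in>?L. A y j)" .
  have 3: "(\<Prod>p\<in>(\<lambda>j. (y, j)) ` ?U. case p of (i, j) \<Rightarrow> A i j) = (\<Prod>j\<in>?U. A y j)"
    by (subst prod.reindex) (auto simp: inj_on_def)
  have "S - {y} = ?L \<union> ?U" by auto
  then have "(\<Prod>j\<in>S-{y}. A y j) = (\<Prod>j\<in>?L \<union> ?U. A y j)" by simp
  also have "\<dots> = (\<Prod>j\<in>?L. A y j) * (\<Prod>j\<in>?U. A y j)"
    by (rule prod.union_disjoint) (use fin in auto)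
  finally have 4: "(\<Prod>j\<in>S-{y}. A y j) = (\<Prod>j\<in>?L. A y j) * (\<Prod>j\<in>?U. A y j)" .
  show ?thesis unfolding 1 2 3 4 by (simp add: algebra_simps)
qed


locale lab =
  fixes \<beta> :: "'a::field_char_0" and p q :: "nat \<Rightarrow> 'a"
begin

definition uu :: "nat \<Rightarrow> 'a" where "uu k = q k + \<beta> * p k"
definition DD :: "nat \<Rightarrow> nat \<Rightarrow> 'a" where "DD k l = p k * q l + p l * q k + \<beta> * p k * p l"
definition NN :: "nat \<Rightarrow> nat \<Rightarrow> 'a" where "NN k l = (p l * q k - p k * q l) / DD k l"
definition NX :: "'a \<Rightarrow> nat \<Rightarrow> 'a" where "NX x k = (p k - x * q k) / (p k + x * uu k)"
definition cc :: "nat set \<Rightarrow> nat \<Rightarrow> 'a" where "cc R k = (\<Prod>j\<in>R-{k}. inverse (NN k j))"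
definition Phi :: "nat set \<Rightarrow> 'a \<Rightarrow> 'a" where "Phi R x = (\<Sum>k\<in>R. NX x k * cc R k)"
definition Psi :: "nat set \<Rightarrow> 'a \<Rightarrow> 'a" where "Psi R x = (\<Prod>k\<in>R. NX x k)"
definition ee :: "nat set \<Rightarrow> 'a" where "ee R = (if even (card R) then 1 else 0)"

lemma DD_sym: "DD l k = DD k l" unfolding DD_def by (simp add: algebra_simps)

lemma NN_antisym: "NN l k = - NN k l"
  unfolding NN_def DD_sym[of l k] by (simp add: minus_divide_left algebra_simps)

lemma NN_nz: "p l * q k \<noteq> p k * q l \<Longrightarrow> DD k l \<noteq> 0 \<Longrightarrow> NN k l \<noteq> 0"
  unfolding NN_def by auto

lemma NX_at_zero_point: "q k \<noteq> 0 \<Longrightarrow> NX (p k / q k) k = 0"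
  unfolding NX_def by simp

lemma NX_eq_NN: assumes "q k \<noteq> 0" "DD k l \<noteq> 0" shows "NX (p k / q k) l = NN k l"
proof -
  have "p l + p k / q k * uu l = DD k l / q k" using assms(1) unfolding uu_def DD_def
    by (simp add: field_simps)
  moreover have "p l - p k / q k * q l = (p l * q k - p k * q l) / q k" using assms(1)
    by (simp add: field_simps)
  ultimately show ?thesis using assms unfolding NX_def NN_def by simp
qed

lemma NX_0: "p l \<noteq> 0 \<Longrightarrow> NX 0 l = 1" unfolding NX_def by simp

lemma pole_id:
  assumes "uu k \<noteq> 0" "DD k j \<noteq> 0"
  shows "p j + (- p k / uu k) * uu j = NN k j * (p j - (- p k / uu k) * q j)"
proof -
  have a: "p j + (- p k / uu k) * uu j = (p j * q k - p k * q j) / uu k"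
    using assms(1) unfolding uu_def by (simp add: field_simps)
  have b: "p j - (- p k / uu k) * q j = DD k j / uu k"
    using assms(1) unfolding uu_def DD_def by (simp add: field_simps)
  show ?thesis unfolding a b NN_def using assms by simp
qed

lemma case2:
  assumes "k \<noteq> l" "p l * q k \<noteq> p k * q l" "DD k l \<noteq> 0"
    "p k + x * uu k \<noteq> 0" "p l + x * uu l \<noteq> 0"
  shows "NX x k * inverse (NN k l) + NX x l * inverse (NN l k) = NX x k * NX x l - 1"
proof -
  have n: "p l * q k - p k * q l \<noteq> 0" using assms(2) by simp
  have "NX x k * inverse (NN k l) + NX x l * inverse (NN l k) = (NX x k - NX x l) * inverse (NN k l)"
    unfolding NN_antisym[of l k] by (simp add: algebra_simps)
  also have "\<dots> = (NX x k - NX x l) * DD k l / (p l * q k - p k * q l)"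
    unfolding NN_def by (simp add: field_simps)
  also have "\<dots> = NX x k * NX x l - 1"
  proof -
    define Lk where "Lk = p k + x * uu k"
    define Ll where "Ll = p l + x * uu l"
    define Zk where "Zk = p k - x * q k"
    define Zl where "Zl = p l - x * q l"
    define nn where "nn = p l * q k - p k * q l"
    have key: "(Zk * Ll - Zl * Lk) * DD k l = (Zk * Zl - Lk * Ll) * nn"
      unfolding Lk_def Ll_def Zk_def Zl_def nn_def DD_def uu_def by algebra
    have h: "Lk \<noteq> 0" "Ll \<noteq> 0" "nn \<noteq> 0" using assms n unfolding Lk_def Ll_def nn_def by auto
    have e1: "NX x k = Zk / Lk" and e2: "NX x l = Zl / Ll" unfolding NX_def Zk_def Lk_def Zl_def Ll_def by auto
    have "(NX x k - NX x l) * DD k l / (p l * q k - p k * q l) = (Zk * Ll - Zl * Lk) * DD k l / (Lk * Ll * nn)"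
      unfolding e1 e2 nn_def[symmetric] using h by (simp add: field_simps)
    also have "\<dots> = (Zk * Zl - Lk * Ll) / (Lk * Ll)" unfolding key using h by (simp add: field_simps)
    also have "\<dots> = NX x k * NX x l - 1" unfolding e1 e2 using h by (simp add: field_simps)
    finally show ?thesis .
  qed
  finally show ?thesis .
qed

end

context lab begin

definition goodset :: "nat set \<Rightarrow> bool" where
  "goodset R \<longleftrightarrow> finite R \<and> (\<forall>k\<in>R. p k \<noteq> 0) \<and>
     (\<forall>k\<in>R. \<forall>l\<in>R. k \<noteq> l \<longrightarrow> p l * q k \<noteq> p k * q l \<and> DD k l \<noteq> 0) \<and>
     (\<exists>\<xi>. \<forall>k\<in>R. k \<noteq> \<xi> \<longrightarrow> q k \<noteq> 0 \<and> uu k \<noteq> 0)"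

lemma goodset_subset: "goodset R \<Longrightarrow> S \<subseteq> R \<Longrightarrow> goodset S"
  unfolding goodset_def by (meson finite_subset subsetD)

definition Pp :: "nat set \<Rightarrow> 'a poly" where
  "Pp R = (\<Sum>k\<in>R. smult (cc R k) ([:p k, - q k:] * (\<Prod>j\<in>R-{k}. [:p j, uu j:])))
          - (\<Prod>k\<in>R. [:p k, - q k:]) + smult (ee R) (\<Prod>k\<in>R. [:p k, uu k:])"

lemma poly_Pp: "poly (Pp R) x = (\<Sum>k\<in>R. cc R k * ((p k - x * q k) * (\<Prod>j\<in>R-{k}. p j + x * uu j)))
   - (\<Prod>k\<in>R. p k - x * q k) + ee R * (\<Prod>k\<in>R. p k + x * uu k)"
  by (simp add: Pp_def poly_sum poly_prod algebra_simps)

lemma Pp_eval: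
  assumes "finite R" "(\<Prod>k\<in>R. p k + x * uu k) \<noteq> 0"
  shows "poly (Pp R) x = (Phi R x - Psi R x + ee R) * (\<Prod>k\<in>R. p k + x * uu k)"
proof -
  let ?Q = "\<Prod>k\<in>R. p k + x * uu k"
  have L: "\<forall>k\<in>R. p k + x * uu k \<noteq> 0" using assms by auto
  have 1: "Phi R x * ?Q = (\<Sum>k\<in>R. cc R k * ((p k - x * q k) * (\<Prod>j\<in>R-{k}. p j + x * uu j)))"
    unfolding Phi_def sum_distrib_right
  proof (rule sum.cong[OF refl])
    fix k assume k: "k \<in> R"
    have "?Q = (p k + x * uu k) * (\<Prod>j\<in>R-{k}. p j + x * uu j)" using k assms(1) by (simp add: prod.remove)
    then show "NX x k * cc R k * ?Q = cc R k * ((p k - x * q k) * (\<Prod>j\<in>R-{k}. p j + x * uu j))"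
      using L k unfolding NX_def by (simp add: field_simps)
  qed
  have 2: "Psi R x * ?Q = (\<Prod>k\<in>R. p k - x * q k)"
    unfolding Psi_def prod.distrib[symmetric]
    by (rule prod.cong[OF refl]) (use L in \<open>simp add: NX_def\<close>)
  show ?thesis unfolding poly_Pp using 1 2 by (simp add: algebra_simps)
qed

definition dd :: "nat \<Rightarrow> nat" where "dd k = (if q k = 0 \<and> uu k = 0 then 0 else 1)"

lemma deg_lin1: "degree [:p k, - q k:] \<le> dd k" unfolding dd_def by auto
lemma deg_lin2: "degree [:p k, uu k:] \<le> dd k" unfolding dd_def by auto

lemma deg_prod2: "finite A \<Longrightarrow> degree (\<Prod>j\<in>A. [:p j, uu j:]) \<le> (\<Sum>j\<in>A. dd j)"
  apply (rule order_trans[OF degree_prod_sum_le], assumption)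
  apply (rule sum_mono) apply (simp only: comp_def) apply (rule deg_lin2) done

lemma deg_prod1: "finite A \<Longrightarrow> degree (\<Prod>j\<in>A. [:p j, - q j:]) \<le> (\<Sum>j\<in>A. dd j)"
  apply (rule order_trans[OF degree_prod_sum_le], assumption)
  apply (rule sum_mono) apply (simp only: comp_def) apply (rule deg_lin1) done

lemma deg_Pp:
  assumes "finite R"
  shows "degree (Pp R) \<le> (\<Sum>j\<in>R. dd j)"
  unfolding Pp_def
proof (intro degree_add_le degree_diff_le degree_sum_le assms)
  fix k assume k: "k \<in> R"
  have "degree (smult (cc R k) ([:p k, - q k:] * (\<Prod>j\<in>R-{k}. [:p j, uu j:])))
      \<le> degree [:p k, - q k:] + degree (\<Prod>j\<in>R-{k}. [:p j, uu j:])"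
    by (rule order_trans[OF degree_smult_le degree_mult_le])
  also have "\<dots> \<le> dd k + (\<Sum>j\<in>R-{k}. dd j)"
    using deg_lin1 deg_prod2[of "R-{k}"] assms by (intro add_mono) auto
  also have "\<dots> = (\<Sum>j\<in>R. dd j)" using k assms by (simp add: sum.remove)
  finally show "degree (smult (cc R k) ([:p k, - q k:] * (\<Prod>j\<in>R-{k}. [:p j, uu j:]))) \<le> (\<Sum>j\<in>R. dd j)" .
next
  show "degree (\<Prod>k\<in>R. [:p k, - q k:]) \<le> (\<Sum>j\<in>R. dd j)" using deg_prod1 assms by auto
next
  show "degree (smult (ee R) (\<Prod>k\<in>R. [:p k, uu k:])) \<le> (\<Sum>j\<in>R. dd j)"
    using deg_prod2 assms order_trans[OF degree_smult_le] by blast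
qed

lemma sum_dd: "finite R \<Longrightarrow> (\<Sum>j\<in>R. dd j) = card {k\<in>R. q k \<noteq> 0 \<or> uu k \<noteq> 0}"
proof -
  assume f: "finite R"
  have "card {k\<in>R. q k \<noteq> 0 \<or> uu k \<noteq> 0} = (\<Sum>j\<in>{k\<in>R. q k \<noteq> 0 \<or> uu k \<noteq> 0}. 1)" by simp
  also have "\<dots> = (\<Sum>j\<in>R. if q j \<noteq> 0 \<or> uu j \<noteq> 0 then 1 else 0)" using f by (rule sum.inter_filter)
  also have "\<dots> = (\<Sum>j\<in>R. dd j)" unfolding dd_def by (rule sum.cong) auto
  finally show ?thesis by simp
qed

end

context lab begin

lemma ee_flip: "finite R \<Longrightarrow> k \<in> R \<Longrightarrow> ee R + ee (R - {k}) = 1"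
  unfolding ee_def by (auto simp: card_Diff_singleton)

lemma good_pair:
  assumes "goodset R" "k \<in> R" "l \<in> R" "k \<noteq> l"
  shows "NN k l \<noteq> 0" "DD k l \<noteq> 0" "p l * q k \<noteq> p k * q l"
proof -
  have h: "p l * q k \<noteq> p k * q l \<and> DD k l \<noteq> 0" using assms unfolding goodset_def by blast
  then show "DD k l \<noteq> 0" "p l * q k \<noteq> p k * q l" by auto
  show "NN k l \<noteq> 0" using h NN_nz by blast
qed

lemma good_p: "goodset R \<Longrightarrow> k \<in> R \<Longrightarrow> p k \<noteq> 0" unfolding goodset_def by blast
lemma good_fin: "goodset R \<Longrightarrow> finite R" unfolding goodset_def by blast

lemma core_roots_u:
  assumes g: "goodset R" and k: "k \<in> R" and u: "uu k \<noteq> 0"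
  shows "poly (Pp R) (- p k / uu k) = 0"
proof -
  define z where "z = - p k / uu k"
  have fin: "finite R" using g unfolding goodset_def by auto
  have Lk: "p k + z * uu k = 0" unfolding z_def using u by simp
  have a: "\<forall>l\<in>R-{k}. (\<Prod>j\<in>R-{l}. p j + z * uu j) = 0"
    using Lk k fin by (auto intro!: prod_zero)
  have b: "(\<Prod>j\<in>R. p j + z * uu j) = 0" using Lk k fin by (auto intro!: prod_zero)
  have s: "(\<Sum>l\<in>R. cc R l * ((p l - z * q l) * (\<Prod>j\<in>R-{l}. p j + z * uu j)))
      = cc R k * ((p k - z * q k) * (\<Prod>j\<in>R-{k}. p j + z * uu j))"
  proof -
    have "(\<Sum>l\<in>R-{k}. cc R l * ((p l - z * q l) * (\<Prod>j\<in>R-{l}. p j + z * uu j))) = 0"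
      by (rule sum.neutral) (use a in simp)
    then show ?thesis using k fin by (simp add: sum.remove)
  qed
  have c: "cc R k * (\<Prod>j\<in>R-{k}. p j + z * uu j) = (\<Prod>j\<in>R-{k}. p j - z * q j)"
    unfolding cc_def prod.distrib[symmetric]
  proof (rule prod.cong[OF refl])
    fix j assume j: "j \<in> R - {k}"
    have nz: "NN k j \<noteq> 0" "DD k j \<noteq> 0" using good_pair[OF g k, of j] j by auto
    have "p j + z * uu j = NN k j * (p j - z * q j)" unfolding z_def using pole_id[OF u nz(2)] .
    then show "inverse (NN k j) * (p j + z * uu j) = p j - z * q j" using nz by simp
  qed
  have d: "(\<Prod>j\<in>R. p j - z * q j) = (p k - z * q k) * (\<Prod>j\<in>R-{k}. p j - z * q j)"
    using k fin by (simp add: prod.remove)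
  have "poly (Pp R) z = 0"
    unfolding poly_Pp s b d c[symmetric] by (simp add: algebra_simps)
  then show ?thesis unfolding z_def .
qed

end

context lab begin

lemma core:
  assumes "goodset R" "\<forall>k\<in>R. p k + x * uu k \<noteq> 0"
  shows "Phi R x = Psi R x - ee R"
  using assms
proof (induction "card R" arbitrary: R x rule: less_induct)
  case less
  have g: "goodset R" and Lx: "\<forall>k\<in>R. p k + x * uu k \<noteq> 0" using less.prems by auto
  have fin: "finite R" using g by (rule good_fin)
  consider "card R = 0" | "card R = 1" | "card R = 2" | "card R \<ge> 3" by linarith
  then show ?case
  proof cases
    case 1
    then have "R = {}" using fin by auto
    then show ?thesis by (simp add: Phi_def Psi_def ee_def)
  next
    case 2
    then obtain k where "R = {k}" by (auto simp: card_Suc_eq)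
    then show ?thesis by (simp add: Phi_def Psi_def ee_def cc_def)
  next
    case 3
    then obtain k l where R: "R = {k, l}" and kl: "k \<noteq> l" by (auto simp: card_Suc_eq numeral_2_eq_2)
    have pr: "p l * q k \<noteq> p k * q l" "DD k l \<noteq> 0" using good_pair[OF g, of k l] R kl by auto
    have c1: "cc R k = inverse (NN k l)" using kl unfolding cc_def R by (simp add: insert_Diff_if)
    have c2: "cc R l = inverse (NN l k)" using kl unfolding cc_def R by (simp add: insert_Diff_if)
    have "Phi R x = NX x k * inverse (NN k l) + NX x l * inverse (NN l k)"
      unfolding Phi_def using kl c1 c2 R by simp
    also have "\<dots> = NX x k * NX x l - 1"
      by (rule case2[OF kl pr]) (use Lx R in auto)
    also have "\<dots> = Psi R x - ee R" unfolding Psi_def ee_def R using kl by simp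
    finally show ?thesis .
  next
    case 4
    obtain \<xi> where xi: "\<forall>k\<in>R. k \<noteq> \<xi> \<longrightarrow> q k \<noteq> 0 \<and> uu k \<noteq> 0" using g unfolding goodset_def by blast
    define Aq where "Aq = {k\<in>R. q k \<noteq> 0}"
    define Au where "Au = {k\<in>R. uu k \<noteq> 0}"
    define Zq where "Zq = (\<lambda>k. p k / q k) ` Aq"
    define Zu where "Zu = (\<lambda>k. - p k / uu k) ` Au"
    have finA: "finite Aq" "finite Au" using fin unfolding Aq_def Au_def by auto
    have rootsU: "\<forall>z\<in>Zu. poly (Pp R) z = 0"
      unfolding Zu_def Au_def using core_roots_u[OF g] by auto
    have rootsQ: "\<forall>z\<in>Zq. poly (Pp R) z = 0"
    proof
      fix z assume "z \<in> Zq"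
      then obtain k where k: "k \<in> R" "q k \<noteq> 0" and z: "z = p k / q k" unfolding Zq_def Aq_def by auto
      show "poly (Pp R) z = 0"
      proof (cases "z \<in> Zu")
        case True then show ?thesis using rootsU by auto
      next
        case False
        have Lz: "\<forall>j\<in>R. p j + z * uu j \<noteq> 0"
        proof
          fix j assume j: "j \<in> R"
          show "p j + z * uu j \<noteq> 0"
          proof
            assume h: "p j + z * uu j = 0"
            show False
            proof (cases "uu j = 0")
              case True then show False using h good_p[OF g j] by simp
            next
              case False
              then have "z = - p j / uu j" using h by (simp add: field_simps) (metis add.commute add_eq_0_iff2 mult.commute)
              then have "z \<in> Zu" unfolding Zu_def Au_def using j False by auto
              then show False using \<open>z \<notin> Zu\<close> by simp
            qed
          qed
        qed
        then have Qz: "(\<Prod>j\<in>R. p j + z * uu j) \<noteq> 0" using fin by auto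
        have Ps: "Psi R z = 0"
          unfolding Psi_def using k fin z NX_at_zero_point[OF k(2)] by (auto intro!: prod_zero)
        have trm: "NX z l * cc R l = - cc (R - {k}) l" if l: "l \<in> R - {k}" for l
        proof -
          have pl: "NN k l \<noteq> 0" "DD k l \<noteq> 0" using good_pair[OF g k(1), of l] l by auto
          have a: "NX z l = NN k l" unfolding z using NX_eq_NN[OF k(2) pl(2)] .
          have "cc R l = inverse (NN l k) * (\<Prod>j\<in>R-{l}-{k}. inverse (NN l j))"
            unfolding cc_def using fin k l by (subst prod.remove[of _ k]) auto
          also have "R - {l} - {k} = R - {k} - {l}" by auto
          finally have b: "cc R l = inverse (NN l k) * cc (R - {k}) l" unfolding cc_def by simp
          show ?thesis unfolding a b NN_antisym[of l k] using pl by (simp add: field_simps)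
        qed
        have Ph: "Phi R z = - (\<Sum>l\<in>R-{k}. cc (R - {k}) l)"
        proof -
          have "Phi R z = NX z k * cc R k + (\<Sum>l\<in>R-{k}. NX z l * cc R l)"
            unfolding Phi_def using fin k by (simp add: sum.remove)
          also have "NX z k = 0" unfolding z using NX_at_zero_point[OF k(2)] .
          also have "(\<Sum>l\<in>R-{k}. NX z l * cc R l) = (\<Sum>l\<in>R-{k}. - cc (R - {k}) l)"
            using trm by (rule sum.cong[OF refl])
          finally show ?thesis by (simp add: sum_negf)
        qed
        have IH: "Phi (R - {k}) 0 = Psi (R - {k}) 0 - ee (R - {k})"
        proof (rule less.hyps)
          show "card (R - {k}) < card R" using fin k 4 by simp
          show "goodset (R - {k})" using goodset_subset[OF g] by auto
          show "\<forall>l\<in>R - {k}. p l + 0 * uu l \<noteq> 0" using good_p[OF g] by auto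
        qed
        have Ph0: "Phi (R - {k}) 0 = (\<Sum>l\<in>R-{k}. cc (R - {k}) l)"
          unfolding Phi_def using NX_0 good_p[OF g] by (intro sum.cong) auto
        have Ps0: "Psi (R - {k}) 0 = 1"
          unfolding Psi_def using NX_0 good_p[OF g] by (intro prod.neutral) auto
        have ef: "ee R + ee (R - {k}) = 1" using ee_flip fin k by auto
        have "Phi R z - Psi R z + ee R = 0"
          using Ph Ps IH Ph0 Ps0 ef by (simp add: algebra_simps) (metis add.commute add_left_cancel)
        then show ?thesis using Pp_eval[OF fin Qz] by simp
      qed
    qed
    have injq: "inj_on (\<lambda>k. p k / q k) Aq"
    proof (rule inj_onI)
      fix k l assume kl: "k \<in> Aq" "l \<in> Aq" "p k / q k = p l / q l"
      show "k = l"
      proof (rule ccontr)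
        assume "k \<noteq> l"
        then have "p l * q k \<noteq> p k * q l" using good_pair[OF g] kl unfolding Aq_def by auto
        moreover have "p k * q l = p l * q k" using kl unfolding Aq_def by (simp add: frac_eq_eq)
        ultimately show False by simp
      qed
    qed
    have inju: "inj_on (\<lambda>k. - p k / uu k) Au"
    proof (rule inj_onI)
      fix k l assume kl: "k \<in> Au" "l \<in> Au" "- p k / uu k = - p l / uu l"
      show "k = l"
      proof (rule ccontr)
        assume "k \<noteq> l"
        then have "p l * q k \<noteq> p k * q l" using good_pair[OF g] kl unfolding Au_def by auto
        moreover have "p k * uu l = p l * uu k" using kl unfolding Au_def by (simp add: frac_eq_eq)
        then have "p k * q l = p l * q k" unfolding uu_def by (simp add: algebra_simps)
        ultimately show False by simp
      qed
    qed
    have int: "Zq \<inter> Zu \<subseteq> {- 2 / \<beta>}"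
    proof
      fix z assume "z \<in> Zq \<inter> Zu"
      then obtain k l where k: "k \<in> R" "q k \<noteq> 0" and l: "l \<in> R" "uu l \<noteq> 0"
        and z1: "z = p k / q k" and z2: "z = - p l / uu l" unfolding Zq_def Zu_def Aq_def Au_def by auto
      have "p k / q k = - p l / uu l" using z1 z2 by simp
      then have e: "p k * uu l = - p l * q k" using k l by (simp add: field_simps)
      have "k = l"
      proof (rule ccontr)
        assume "k \<noteq> l"
        then have "DD k l \<noteq> 0" using good_pair[OF g k(1) l(1)] by auto
        moreover have "DD k l = p k * uu l + p l * q k" unfolding DD_def uu_def by (simp add: algebra_simps)
        then have "DD k l = 0" using e by simp
        ultimately show False by simp
      qed
      then have "p k * uu k = p k * (- q k)" using e by simp
      then have "uu k = - q k" using good_p[OF g k(1)] mult_left_cancel by blast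
      then have e2: "\<beta> * p k = - 2 * q k" unfolding uu_def by (simp add: algebra_simps) (metis add_eq_0_iff2)
      then have "\<beta> \<noteq> 0" using k(2) by auto
      have zq: "z * q k = p k" using z1 k(2) by simp
      have "(\<beta> * z + 2) * q k = \<beta> * (z * q k) + 2 * q k" by (simp add: algebra_simps)
      also have "\<dots> = \<beta> * p k + 2 * q k" using zq by simp
      also have "\<dots> = 0" using e2 by simp
      finally have "\<beta> * z + 2 = 0" using k(2) by simp
      then have "\<beta> * z = - 2" by (simp add: eq_neg_iff_add_eq_0)
      then have "z = - 2 / \<beta>" using \<open>\<beta> \<noteq> 0\<close> by (simp add: field_simps)
      then show "z \<in> {- 2 / \<beta>}" by simp
    qed
    have cint: "card (Zq \<inter> Zu) \<le> 1" using card_mono[OF _ int] by simp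
    have cun: "card (Zq \<union> Zu) + card (Zq \<inter> Zu) = card Zq + card Zu"
      using card_Un_Int[of Zq Zu] finA unfolding Zq_def Zu_def by auto
    have cZ: "card Zq = card Aq" "card Zu = card Au"
      unfolding Zq_def Zu_def using card_image injq inju by auto
    have cA: "card Aq + card Au = card (Aq \<union> Au) + card (Aq \<inter> Au)"
      using card_Un_Int[OF finA] by simp
    have "R - {\<xi>} \<subseteq> Aq \<inter> Au" using xi unfolding Aq_def Au_def by auto
    then have "card (R - {\<xi>}) \<le> card (Aq \<inter> Au)" using finA by (intro card_mono) auto
    moreover have "card (R - {\<xi>}) \<ge> card R - 1" by (simp add: card_Diff_singleton_if)
    ultimately have c2: "card (Aq \<inter> Au) \<ge> 2" using 4 by linarith
    have AU: "Aq \<union> Au = {k\<in>R. q k \<noteq> 0 \<or> uu k \<noteq> 0}" unfolding Aq_def Au_def by auto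
    have cnt: "card (Zq \<union> Zu) > (\<Sum>j\<in>R. dd j)"
    proof -
      have "(\<Sum>j\<in>R. dd j) = card (Aq \<union> Au)" using sum_dd[OF fin] AU by simp
      then show ?thesis using cint cun cZ cA c2 by linarith
    qed
    have P0: "Pp R = 0"
    proof (rule ccontr)
      assume nz: "Pp R \<noteq> 0"
      have "Zq \<union> Zu \<subseteq> {z. poly (Pp R) z = 0}" using rootsQ rootsU by auto
      then have "card (Zq \<union> Zu) \<le> card {z. poly (Pp R) z = 0}"
        using poly_roots_finite[OF nz] by (rule card_mono[rotated])
      also have "\<dots> \<le> degree (Pp R)" using card_poly_roots_bound[OF nz] .
      also have "\<dots> \<le> (\<Sum>j\<in>R. dd j)" using deg_Pp[OF fin] .
      finally show False using cnt by simp
    qed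
    have Qx: "(\<Prod>j\<in>R. p j + x * uu j) \<noteq> 0" using Lx fin by auto
    have "(Phi R x - Psi R x + ee R) * (\<Prod>j\<in>R. p j + x * uu j) = 0"
      using Pp_eval[OF fin Qx] P0 by simp
    then have "Phi R x - Psi R x + ee R = 0" using Qx by simp
    then show ?thesis by (simp add: algebra_simps)
  qed
qed

end

context lab begin

definition weak :: "nat set \<Rightarrow> bool" where
  "weak R \<longleftrightarrow> finite R \<and> (\<forall>k\<in>R. p k \<noteq> 0) \<and>
     (\<forall>k\<in>R. \<forall>l\<in>R. k \<noteq> l \<longrightarrow> DD k l \<noteq> 0) \<and>
     (\<exists>\<xi>. \<forall>k\<in>R. k \<noteq> \<xi> \<longrightarrow> q k \<noteq> 0 \<and> uu k \<noteq> 0)"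

lemma weak_subset: "weak R \<Longrightarrow> S \<subseteq> R \<Longrightarrow> weak S"
  unfolding weak_def by (meson finite_subset subsetD)

lemma weak_good: "weak R \<Longrightarrow> \<forall>k\<in>R. \<forall>l\<in>R. k \<noteq> l \<longrightarrow> p l * q k \<noteq> p k * q l \<Longrightarrow> goodset R"
  unfolding weak_def goodset_def by blast

lemma PiS_zero: "finite R \<Longrightarrow> a \<in> R \<Longrightarrow> b \<in> R \<Longrightarrow> a < b \<Longrightarrow> A a b = 0 \<Longrightarrow> PiS A R = 0"
  unfolding PiS_def apply (rule prod_zero) apply (simp add: finite_Pairs)
  apply (rule bexI[of _ "(a,b)"]) apply simp apply (simp add: Pairs_def) done

lemma NX_par:
  assumes "p b * q a = p a * q b" "p a \<noteq> 0" "p b \<noteq> 0" "p a + x * uu a \<noteq> 0" "p b + x * uu b \<noteq> 0"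
  shows "NX x a = NX x b"
proof -
  have "(p a - x * q a) * (p b + x * uu b) = (p b - x * q b) * (p a + x * uu a)"
    using assms(1) unfolding uu_def by algebra
  then show ?thesis unfolding NX_def using assms(4,5) by (simp add: frac_eq_eq)
qed

lemma NN_par:
  assumes "p b * q a = p a * q b" "DD a j \<noteq> 0" "DD b j \<noteq> 0"
  shows "NN a j = NN b j"
proof -
  have "(p j * q a - p a * q j) * DD b j = (p j * q b - p b * q j) * DD a j"
    using assms(1) unfolding DD_def by algebra
  then show ?thesis unfolding NN_def using assms(2,3) by (simp add: frac_eq_eq)
qed

lemma II:
  assumes w: "weak R" and Lx: "\<forall>k\<in>R. p k + x * uu k \<noteq> 0"
  shows "(\<Sum>y\<in>R. (-1) ^ card {j\<in>R. j < y} * NX x y * PiS NN (R - {y})) = (Psi R x - ee R) * PiS NN R"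
proof -
  have fin: "finite R" using w unfolding weak_def by auto
  have anti: "\<forall>i\<in>R. \<forall>j\<in>R. NN j i = - NN i j" using NN_antisym by blast
  show ?thesis
  proof (cases "\<forall>k\<in>R. \<forall>l\<in>R. k \<noteq> l \<longrightarrow> p l * q k \<noteq> p k * q l")
    case True
    have g: "goodset R" using weak_good[OF w True] .
    have "(Psi R x - ee R) * PiS NN R = Phi R x * PiS NN R" using core[OF g Lx] by simp
    also have "\<dots> = (\<Sum>y\<in>R. NX x y * (cc R y * PiS NN R))" unfolding Phi_def sum_distrib_right
      by (simp add: mult.assoc)
    also have "\<dots> = (\<Sum>y\<in>R. (-1) ^ card {j\<in>R. j < y} * NX x y * PiS NN (R - {y}))"
    proof (rule sum.cong[OF refl])
      fix y assume y: "y \<in> R"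
      have "cc R y * (\<Prod>j\<in>R-{y}. NN y j) = 1"
        unfolding cc_def prod.distrib[symmetric]
        by (rule prod.neutral) (use good_pair[OF g y] in auto)
      then have "cc R y * PiS NN R = PiS NN (R - {y}) * (-1) ^ card {j\<in>R. j < y}"
        unfolding PiS_rel[OF fin y anti] by (simp add: algebra_simps)
      then show "NX x y * (cc R y * PiS NN R) = (-1) ^ card {j\<in>R. j < y} * NX x y * PiS NN (R - {y})"
        by (simp add: algebra_simps)
    qed
    finally show ?thesis by simp
  next
    case False
    then obtain a0 b0 where ab0: "a0 \<in> R" "b0 \<in> R" "a0 \<noteq> b0" "p b0 * q a0 = p a0 * q b0" by blast
    obtain a b where ab: "a \<in> R" "b \<in> R" "a < b" "p b * q a = p a * q b"
    proof (cases "a0 < b0")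
      case True then show ?thesis using that ab0 by blast
    next
      case False then have "b0 < a0" using ab0(3) by auto
      show ?thesis by (rule that[of b0 a0]) (use ab0(1,2) ab0(4)[symmetric] \<open>b0 < a0\<close> in auto)
    qed
    have pa: "p a \<noteq> 0" "p b \<noteq> 0" using w ab unfolding weak_def by auto
    have DDab: "\<forall>j\<in>R. j \<noteq> a \<longrightarrow> j \<noteq> b \<longrightarrow> DD a j \<noteq> 0 \<and> DD b j \<noteq> 0" using w ab unfolding weak_def by auto
    have NNab: "NN a b = 0" unfolding NN_def using ab(4) by simp
    have R0: "PiS NN R = 0" using PiS_zero[OF fin ab(1,2,3)] NNab .
    let ?f = "\<lambda>y. (-1) ^ card {j\<in>R. j < y} * NX x y * PiS NN (R - {y})"
    have rest: "(\<Sum>y\<in>R-{a}-{b}. ?f y) = 0"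
    proof (rule sum.neutral, rule ballI)
      fix y assume "y \<in> R - {a} - {b}"
      then have "PiS NN (R - {y}) = 0" using PiS_zero[of "R - {y}" a b NN] fin ab NNab by auto
      then show "?f y = 0" by simp
    qed
    have split: "(\<Sum>y\<in>R. ?f y) = ?f a + ?f b + (\<Sum>y\<in>R-{a}-{b}. ?f y)"
      using fin ab by (simp add: sum.remove[of R a] sum.remove[of "R - {a}" b] algebra_simps)
    have antia: "\<forall>i\<in>R-{a}. \<forall>j\<in>R-{a}. NN j i = - NN i j" using NN_antisym by blast
    have antib: "\<forall>i\<in>R-{b}. \<forall>j\<in>R-{b}. NN j i = - NN i j" using NN_antisym by blast
    have Ra: "PiS NN (R - {a}) = PiS NN (R - {a} - {b}) * (-1) ^ card {j\<in>R-{a}. j < b} * (\<Prod>j\<in>R-{a}-{b}. NN b j)"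
      using PiS_rel[OF _ _ antia, of b] fin ab by auto
    have Rb: "PiS NN (R - {b}) = PiS NN (R - {a} - {b}) * (-1) ^ card {j\<in>R-{b}. j < a} * (\<Prod>j\<in>R-{a}-{b}. NN a j)"
    proof -
      have "R - {b} - {a} = R - {a} - {b}" by auto
      then show ?thesis using PiS_rel[OF _ _ antib, of a] fin ab by auto
    qed
    have Pab: "(\<Prod>j\<in>R-{a}-{b}. NN a j) = (\<Prod>j\<in>R-{a}-{b}. NN b j)"
      by (rule prod.cong[OF refl]) (use NN_par[OF ab(4)] DDab in auto)
    have Xab: "NX x a = NX x b" using NX_par[OF ab(4) pa] Lx ab by auto
    have ca: "card {j\<in>R-{b}. j < a} = card {j\<in>R. j < a}"
    proof -
      have "{j\<in>R-{b}. j < a} = {j\<in>R. j < a}" using ab(3) by auto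
      then show ?thesis by simp
    qed
    have cb: "card {j\<in>R. j < b} = Suc (card {j\<in>R-{a}. j < b})"
    proof -
      have "{j\<in>R-{a}. j < b} = {j\<in>R. j < b} - {a}" by auto
      moreover have "a \<in> {j\<in>R. j < b}" using ab by auto
      moreover have "finite {j\<in>R. j < b}" using fin by auto
      ultimately show ?thesis using card_Suc_Diff1[of "{j\<in>R. j < b}" a] by simp
    qed
    have "?f a + ?f b = 0"
      unfolding Ra Rb Pab Xab ca cb by (simp add: algebra_simps)
    then show ?thesis using split rest R0 by simp
  qed
qed

end

context lab begin

lemma NN_NX: "q m = 1 \<Longrightarrow> NN m y = NX (p m) y"
  unfolding NN_def DD_def NX_def uu_def by (simp add: algebra_simps)

lemma DD_q1: "q m = 1 \<Longrightarrow> p k + p m * uu k = DD m k"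
  unfolding DD_def uu_def by (simp add: algebra_simps)

lemma schur:
  assumes w: "weak T" and q1: "\<forall>k\<in>T. (\<exists>l\<in>T. k < l) \<longrightarrow> q k = 1"
    and S: "S \<subseteq> T" "even (card S)"
  shows "pfs NN S = PiS NN S"
  using S
proof (induction "card S" arbitrary: S rule: less_induct)
  case less
  have finT: "finite T" using w unfolding weak_def by auto
  have fin: "finite S" using less.prems finT finite_subset by blast
  show ?case
  proof (cases "S = {}")
    case True then show ?thesis by (simp add: PiS_def Pairs_def)
  next
    case False
    define m where "m = Min S"
    define S' where "S' = S - {m}"
    have m: "m \<in> S" unfolding m_def using fin False by simp
    have mle: "\<forall>y\<in>S'. m < y"
    proof
      fix y assume y: "y \<in> S'"
      then have "m \<le> y" unfolding S'_def m_def using fin by simp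
      then show "m < y" using y unfolding S'_def by auto
    qed
    have cS: "card S = Suc (card S')" unfolding S'_def using card_Suc_Diff1[OF fin m] by simp
    then have "card S' \<noteq> 0" using less.prems(2) by (auto intro: odd_pos)
    then obtain l where l: "l \<in> S'" by fastforce
    have "m \<in> T" "l \<in> T" "m < l" using less.prems(1) m l mle unfolding S'_def by auto
    then have qm: "q m = 1" using q1 by blast
    have finS': "finite S'" using fin unfolding S'_def by auto
    have wS': "weak S'" by (rule weak_subset[OF w]) (use less.prems(1) in \<open>auto simp: S'_def\<close>)
    have "pfs NN S = (\<Sum>y\<in>S'. (-1) ^ card {j\<in>S'. j < y} * NN m y * pfs NN (S' - {y}))"
      unfolding S'_def m_def using pfs_min[OF fin False] by simp
    also have "\<dots> = (\<Sum>y\<in>S'. (-1) ^ card {j\<in>S'. j < y} * NX (p m) y * PiS NN (S' - {y}))"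
    proof (rule sum.cong[OF refl])
      fix y assume y: "y \<in> S'"
      have "pfs NN (S' - {y}) = PiS NN (S' - {y})"
      proof (rule less.hyps)
        show "card (S' - {y}) < card S" using cS y finS' by (simp add: card_Diff_singleton)
        show "S' - {y} \<subseteq> T" using less.prems(1) unfolding S'_def by auto
        have "card (S' - {y}) = card S' - 1" using y finS' by simp
        then show "even (card (S' - {y}))" using cS less.prems(2) \<open>card S' \<noteq> 0\<close> by auto
      qed
      then show "(-1) ^ card {j\<in>S'. j < y} * NN m y * pfs NN (S' - {y}) =
         (-1) ^ card {j\<in>S'. j < y} * NX (p m) y * PiS NN (S' - {y})"
        using NN_NX[OF qm] by simp
    qed
    also have "\<dots> = (Psi S' (p m) - ee S') * PiS NN S'"
    proof (rule II[OF wS'])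
      show "\<forall>k\<in>S'. p k + p m * uu k \<noteq> 0"
      proof
        fix k assume k: "k \<in> S'"
        have "m \<in> T" "k \<in> T" "m \<noteq> k" using less.prems(1) k m unfolding S'_def by auto
        then have "DD m k \<noteq> 0" using w unfolding weak_def by blast
        then show "p k + p m * uu k \<noteq> 0" using DD_q1[OF qm] by simp
      qed
    qed
    also have "ee S' = 0" unfolding ee_def using cS less.prems(2) by auto
    also have "Psi S' (p m) = (\<Prod>j\<in>S'. NN m j)" unfolding Psi_def using NN_NX[OF qm] by simp
    also have "((\<Prod>j\<in>S'. NN m j) - 0) * PiS NN S' = PiS NN S"
    proof -
      have anti: "\<forall>i\<in>S. \<forall>j\<in>S. NN j i = - NN i j" using NN_antisym by blast
      have "{j\<in>S. j < m} = {}" unfolding m_def using fin Min_le[OF fin] by (auto simp: not_less[symmetric])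
      then have c0: "card {j\<in>S. j < m} = 0" by (simp only: card.empty)
      show ?thesis unfolding PiS_rel[OF fin m anti] c0 S'_def by simp
    qed
    finally show ?thesis by simp
  qed
qed

end

lemma prod_fst_fiber:
  assumes "finite I" "finite X" "fst ` I \<subseteq> X"
  shows "(\<Prod>(i, j)\<in>I. f i) = (\<Prod>i\<in>X. f i ^ card {j. (i, j) \<in> I})"
proof -
  have fib: "\<forall>i\<in>X. finite {j. (i, j) \<in> I}"
  proof
    fix i show "finite {j. (i, j) \<in> I}"
      by (rule finite_subset[of _ "snd ` I"]) (use assms(1) in force)+
  qed
  have I: "I = Sigma X (\<lambda>i. {j. (i, j) \<in> I})" using assms(3) by force
  have "(\<Prod>(i, j)\<in>I. f i) = (\<Prod>(i, j)\<in>Sigma X (\<lambda>i. {j. (i, j) \<in> I}). f i)" using I by simp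
  also have "\<dots> = (\<Prod>i\<in>X. \<Prod>j\<in>{j. (i, j) \<in> I}. f i)"
    by (rule prod.Sigma[symmetric]) (use assms fib in auto)
  also have "\<dots> = (\<Prod>i\<in>X. f i ^ card {j. (i, j) \<in> I})" by simp
  finally show ?thesis .
qed

lemma prod_snd_fiber:
  assumes "finite I" "finite X" "snd ` I \<subseteq> X"
  shows "(\<Prod>(i, j)\<in>I. f j) = (\<Prod>j\<in>X. f j ^ card {i. (i, j) \<in> I})"
proof -
  let ?J = "(\<lambda>(a, b). (b, a)) ` I"
  have inj: "inj_on (\<lambda>(a, b). (b, a)) I" by (auto simp: inj_on_def)
  have "(\<Prod>(j, i)\<in>?J. f j) = (\<Prod>(i, j)\<in>I. f j)"
    by (subst prod.reindex[OF inj]) (simp add: case_prod_beta comp_def)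
  moreover have "(\<Prod>(j, i)\<in>?J. f j) = (\<Prod>j\<in>X. f j ^ card {i. (j, i) \<in> ?J})"
    by (rule prod_fst_fiber) (use assms in force)+
  moreover have "\<And>j. {i. (j, i) \<in> ?J} = {i. (i, j) \<in> I}" by auto
  ultimately show ?thesis by simp
qed

lemma ratio_lemma:
  fixes a b \<beta> :: "'a::field"
  assumes "a \<noteq> 0" "b \<noteq> 0" "1 + \<beta> * a \<noteq> 0" "1 + \<beta> * b \<noteq> 0" "a + b + \<beta> * a * b \<noteq> 0"
  shows "1 - tbar \<beta> a / tbar \<beta> b = (1 - a / tbar \<beta> b) * (((b - a) / (a + b + \<beta> * a * b)) / (1 + \<beta> * a))"
    and "1 - a / tbar \<beta> b = (a + b + \<beta> * a * b) / b"
proof -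
  show e2: "1 - a / tbar \<beta> b = (a + b + \<beta> * a * b) / b"
    unfolding tbar_def using assms by (simp add: field_simps)
  have e1: "1 - tbar \<beta> a / tbar \<beta> b = (b - a) / (b * (1 + \<beta> * a))"
  proof -
    have nz: "b * (1 + \<beta> * a) \<noteq> 0" using assms by simp
    have "tbar \<beta> a / tbar \<beta> b = a * (1 + \<beta> * b) / (b * (1 + \<beta> * a))"
      unfolding tbar_def using assms by (simp add: field_simps)
    then have "1 - tbar \<beta> a / tbar \<beta> b = (b * (1 + \<beta> * a) - a * (1 + \<beta> * b)) / (b * (1 + \<beta> * a))"
      using nz by (simp add: diff_divide_distrib)
    also have "b * (1 + \<beta> * a) - a * (1 + \<beta> * b) = b - a" by (simp add: algebra_simps)
    finally show ?thesis .
  qed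
  show "1 - tbar \<beta> a / tbar \<beta> b = (1 - a / tbar \<beta> b) * (((b - a) / (a + b + \<beta> * a * b)) / (1 + \<beta> * a))"
  proof -
    define D where "D = a + b + \<beta> * a * b"
    define U where "U = 1 + \<beta> * a"
    have "D \<noteq> 0" "U \<noteq> 0" using assms unfolding D_def U_def by auto
    then have "(b - a) / (b * U) = D / b * ((b - a) / D / U)" using assms(2) by (simp add: field_simps)
    then show ?thesis unfolding e1 e2 D_def[symmetric] U_def[symmetric] .
  qed
qed

lemma powi_recip: "(x::'a::field) \<noteq> 0 \<Longrightarrow> 1 / (x powi m) = x powi (- m)"
  by (simp add: power_int_minus divide_inverse)

lemma powi_div_self: "(x::'a::field) \<noteq> 0 \<Longrightarrow> x powi m / x = x powi (m - 1)"
  by (simp add: power_int_diff)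

lemma powi_mult_self: "(x::'a::field) \<noteq> 0 \<Longrightarrow> x powi m * x = x powi (m + 1)"
  by (simp add: power_int_add)


lemma main_rhs:
  fixes k r :: nat and lam :: "nat \<Rightarrow> nat" and \<beta> :: "'a::field_char_0" and t :: "nat \<Rightarrow> 'a"
  assumes h3: "\<forall>i. 1 \<le> i \<and> i \<le> r \<longrightarrow> t i \<noteq> 0"
    and h4: "\<forall>i. 1 \<le> i \<and> i \<le> r \<longrightarrow> 1 + \<beta> * t i \<noteq> 0"
    and h5: "\<forall>i j. 1 \<le> i \<and> i < j \<and> j \<le> r \<longrightarrow> 1 - t i / tbar \<beta> (t j) \<noteq> 0"
  shows "pfaffian (rprime r) (LambdaI \<beta> t lam r I) =
     (\<Prod>i\<in>{1..r}. t i powi (int (lam i) + d_I I i) * (1 + \<beta> * t i) powi (int (c_I I i) + int i - int (rprime r)))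
     * (\<Prod>(i, j)\<in>Delta r. (t j - t i) / (t i + t j + \<beta> * t i * t j))
     * (\<Prod>i\<in>{1..r}. (1 + \<beta> * t i) powi (int (rprime r) - int r))"
proof -
  define n where "n = rprime r"
  define p where "p i = (if i \<le> r then t i else -1)" for i
  define q where "q i = (if i \<le> r then 1 else \<beta>)" for i
  interpret L: lab \<beta> p q .
  define u where "u i = 1 + \<beta> * t i" for i
  define M where "M i j = (t j - t i) / (t i + t j + \<beta> * t i * t j)" for i j
  have nr: "n = r \<or> n = Suc r" "even n" "r \<le> n" "n \<le> Suc r" "odd r \<Longrightarrow> n = Suc r" "even r \<Longrightarrow> n = r"
    unfolding n_def rprime_def by auto
  have Dnz: "t i + t j + \<beta> * t i * t j \<noteq> 0" if "1 \<le> i" "i < j" "j \<le> r" for i j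
  proof -
    have "t j \<noteq> 0" "t i \<noteq> 0" "1 + \<beta> * t i \<noteq> 0" "1 + \<beta> * t j \<noteq> 0" using h3 h4 that by auto
    moreover have "(t i + t j + \<beta> * t i * t j) / t j = 1 - t i / tbar \<beta> (t j)"
      unfolding tbar_def using calculation by (simp add: field_simps)
    moreover have "1 - t i / tbar \<beta> (t j) \<noteq> 0" using h5 that by blast
    ultimately have "(t i + t j + \<beta> * t i * t j) / t j \<noteq> 0" by simp
    then show ?thesis by auto
  qed
  have NNreal: "L.NN i j = M i j" if "i \<le> r" "j \<le> r" for i j
    unfolding L.NN_def L.DD_def p_def q_def M_def using that by (simp add: algebra_simps)
  have NNxi: "L.NN i (Suc r) = u i" if "i \<le> r" for i
    unfolding L.NN_def L.DD_def p_def q_def u_def using that by (simp add: algebra_simps)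
  have weakT: "L.weak {1..n}"
    unfolding L.weak_def
  proof (intro conjI)
    show "finite {1..n}" by simp
    show "\<forall>k\<in>{1..n}. p k \<noteq> 0" using h3 unfolding p_def by auto
    show "\<forall>k\<in>{1..n}. \<forall>l\<in>{1..n}. k \<noteq> l \<longrightarrow> L.DD k l \<noteq> 0"
    proof (intro ballI impI)
      fix k l assume kl: "k \<in> {1..n}" "l \<in> {1..n}" "k \<noteq> l"
      show "L.DD k l \<noteq> 0"
      proof (cases "k \<le> r \<and> l \<le> r")
        case True
        show ?thesis
        proof (cases "k < l")
          case True then show ?thesis using Dnz[of k l] kl \<open>k \<le> r \<and> l \<le> r\<close>
            unfolding L.DD_def p_def q_def by (simp add: algebra_simps)
        next
          case False then have "l < k" using kl by auto
          then show ?thesis using Dnz[of l k] kl \<open>k \<le> r \<and> l \<le> r\<close>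
            unfolding L.DD_def p_def q_def by (simp add: algebra_simps)
        qed
      next
        case False
        then have "(k \<le> r \<and> l = Suc r) \<or> (l \<le> r \<and> k = Suc r)" using kl nr by auto
        then show ?thesis unfolding L.DD_def p_def q_def by (auto simp: algebra_simps)
      qed
    qed
    show "\<exists>\<xi>. \<forall>k\<in>{1..n}. k \<noteq> \<xi> \<longrightarrow> q k \<noteq> 0 \<and> L.uu k \<noteq> 0"
    proof (rule exI[of _ "Suc r"], intro ballI impI)
      fix k assume k: "k \<in> {1..n}" "k \<noteq> Suc r"
      then have "k \<le> r" using nr by auto
      then show "q k \<noteq> 0 \<and> L.uu k \<noteq> 0" using h4 k unfolding L.uu_def q_def p_def by auto
    qed
  qed
  have q1: "\<forall>k\<in>{1..n}. (\<exists>l\<in>{1..n}. k < l) \<longrightarrow> q k = 1"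
    unfolding q_def using nr by auto
  have schur: "pfs L.NN {1..n} = PiS L.NN {1..n}"
    by (rule L.schur[OF weakT q1]) (use nr in simp_all)
  have PiSr: "PiS L.NN {1..r} = (\<Prod>(i, j)\<in>Delta r. M i j)"
  proof -
    have "Pairs {1..r} = Delta r" unfolding Pairs_def Delta_def by auto
    then show ?thesis unfolding PiS_def using NNreal
      by (intro prod.cong) (auto simp: Delta_def)
  qed
  have PiSn: "PiS L.NN {1..n} = (\<Prod>(i, j)\<in>Delta r. M i j) * (\<Prod>i\<in>{1..r}. u i powi (int n - int r))"
  proof (cases "even r")
    case True then show ?thesis using nr PiSr by simp
  next
    case False
    then have n: "n = Suc r" using nr by auto
    have anti: "\<forall>i\<in>{1..n}. \<forall>j\<in>{1..n}. L.NN j i = - L.NN i j" using L.NN_antisym by blast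
    have "PiS L.NN {1..n} = PiS L.NN ({1..n} - {Suc r}) * (-1) ^ card {j\<in>{1..n}. j < Suc r} * (\<Prod>j\<in>{1..n}-{Suc r}. L.NN (Suc r) j)"
      using PiS_rel[OF _ _ anti, of "Suc r"] n by simp
    also have "{1..n} - {Suc r} = {1..r}" using n by auto
    also have "card {j\<in>{1..n}. j < Suc r} = r"
    proof -
      have "{j\<in>{1..n}. j < Suc r} = {1..r}" using n by auto
      then show ?thesis by simp
    qed
    also have "(\<Prod>j\<in>{1..r}. L.NN (Suc r) j) = (\<Prod>j\<in>{1..r}. - u j)"
      proof (rule prod.cong[OF refl])
      fix j assume "j \<in> {1..r}"
      then show "L.NN (Suc r) j = - u j" using L.NN_antisym[of "Suc r" j] NNxi[of j] by simp
    qed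
    also have "\<dots> = (-1) ^ r * (\<Prod>j\<in>{1..r}. u j)" by (simp add: prod_uminus)
    finally have X: "PiS L.NN {1..n} = PiS L.NN {1..r} * (-1) ^ r * ((-1) ^ r * (\<Prod>j\<in>{1..r}. u j))" .
    have m1: "(-1::'a) ^ r * (-1) ^ r = 1" by (simp flip: power_mult_distrib)
    have "PiS L.NN {1..r} * (-1) ^ r * ((-1) ^ r * (\<Prod>j\<in>{1..r}. u j)) = PiS L.NN {1..r} * ((-1::'a) ^ r * (-1) ^ r) * (\<Prod>j\<in>{1..r}. u j)"
      by (simp only: mult.assoc)
    then have "PiS L.NN {1..n} = PiS L.NN {1..r} * (\<Prod>j\<in>{1..r}. u j)" unfolding X m1 by simp
    then show ?thesis using PiSr n by simp
  qed
  define s where "s i = (if i \<le> r then t i powi (int (lam i) + d_I I i) * u i powi (int (c_I I i) + int i - int n) else 1)" for i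
  have entry: "LambdaI \<beta> t lam r I i j = s i * s j * L.NN i j" if ij: "i \<in> {1..n}" "j \<in> {1..n}" "i < j" for i j
  proof -
    have ir: "i \<le> r" "1 \<le> i" using ij nr by auto
    have ti: "t i \<noteq> 0" "u i \<noteq> 0" using h3 h4 ir unfolding u_def by auto
    show ?thesis
    proof (cases "j \<le> r")
      case True
      have tj: "t j \<noteq> 0" "u j \<noteq> 0" using h3 h4 True ij unfolding u_def by auto
      have D: "t i + t j + \<beta> * t i * t j \<noteq> 0" using Dnz ir ij True by auto
      have B: "1 - t i / tbar \<beta> (t j) \<noteq> 0" using h5 ir ij True by auto
      have rat: "(1 - tbar \<beta> (t i) / tbar \<beta> (t j)) / (1 - t i / tbar \<beta> (t j)) = M i j / u i"
        using ratio_lemma(1)[of "t i" "t j" \<beta>] ti tj D B unfolding M_def u_def by simp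
      have F: "F2 \<beta> t r I i j = u i powi (int (c_I I i) + int i - int n) * u j powi (int (c_I I j) + int j - int n) * M i j"
      proof -
        have "F2 \<beta> t r I i j = u i powi (- (int n - int i - int (c_I I i) - 1)) * u j powi (- (int n - int j - int (c_I I j))) * (M i j / u i)"
          unfolding F2_def rat n_def[symmetric] u_def[symmetric] using ti tj by (simp add: powi_recip)
        also have "\<dots> = (u i powi (- (int n - int i - int (c_I I i) - 1)) / u i) * u j powi (- (int n - int j - int (c_I I j))) * M i j"
          by (simp add: algebra_simps)
        also have "u i powi (- (int n - int i - int (c_I I i) - 1)) / u i = u i powi (int (c_I I i) + int i - int n)"
        proof -
          have e: "- (int n - int i - int (c_I I i) - 1) - 1 = int (c_I I i) + int i - int n" by simp
          have "u i powi (- (int n - int i - int (c_I I i) - 1)) / u i = u i powi (- (int n - int i - int (c_I I i) - 1) - 1)"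
            by (rule powi_div_self[OF ti(2)])
          then show ?thesis unfolding e .
        qed
        also have "- (int n - int j - int (c_I I j)) = int (c_I I j) + int j - int n" by simp
        finally show ?thesis .
      qed
      show ?thesis unfolding LambdaI_def using True ir F NNreal[of i j] unfolding s_def by (simp add: algebra_simps)
    next
      case False
      then have j: "j = Suc r" "n = Suc r" using ij nr by auto
      have "LambdaI \<beta> t lam r I i j = t i powi (int (lam i) + d_I I i) * u i powi (- (int n - int i - int (c_I I i) - 1))"
        unfolding LambdaI_def F1_def using False n_def u_def ti by (simp add: powi_recip)
      also have "u i powi (- (int n - int i - int (c_I I i) - 1)) = u i powi (int (c_I I i) + int i - int n) * u i"
      proof -
        have e: "- (int n - int i - int (c_I I i) - 1) = int (c_I I i) + int i - int n + 1" by simp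
        show ?thesis unfolding e by (rule powi_mult_self[OF ti(2), symmetric])
      qed
      finally show ?thesis unfolding s_def using NNxi[of i] ir j by (simp add: algebra_simps)
    qed
  qed
  have "pfaffian n (LambdaI \<beta> t lam r I) = pfs (\<lambda>i j. s i * s j * L.NN i j) {1..n}"
    unfolding pfaffian_pfs by (rule pfs_cong) (use entry in auto)
  also have "\<dots> = (\<Prod>i\<in>{1..n}. s i) * PiS L.NN {1..n}" using pfs_scale[of "{1..n}" s L.NN] schur by simp
  also have "(\<Prod>i\<in>{1..n}. s i) = (\<Prod>i\<in>{1..r}. s i)"
    by (rule prod.mono_neutral_right) (use nr in \<open>auto simp: s_def\<close>)
  also have "(\<Prod>i\<in>{1..r}. s i) = (\<Prod>i\<in>{1..r}. t i powi (int (lam i) + d_I I i) * (1 + \<beta> * t i) powi (int (c_I I i) + int i - int (rprime r)))"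
    unfolding s_def u_def n_def by (rule prod.cong) auto
  finally show ?thesis unfolding PiSn n_def[symmetric] M_def u_def by (simp add: mult.assoc)
qed


lemma per_i:
  fixes x y :: "'a::field"
  assumes "x \<noteq> 0" "y \<noteq> 0" "i \<le> r"
  shows "x ^ l * x ^ a * (y * inverse x) ^ c * inverse y ^ (r - i)
     = x powi (int l + (int a - int c)) * y powi (int c + int i - int n) * y powi (int n - int r)"
proof -
  have 1: "x powi (int l + (int a - int c)) = x ^ l * x ^ a * inverse x ^ c"
    using assms(1) by (simp add: power_int_add power_int_diff power_inverse divide_inverse)
  have 2: "y powi (int c + int i - int n) * y powi (int n - int r) = y powi (int c - int (r - i))"
  proof -
    have e: "int c + int i - int n + (int n - int r) = int c - int (r - i)" using assms(3) by simp
    have "y powi (int c + int i - int n) * y powi (int n - int r) = y powi (int c + int i - int n + (int n - int r))"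
      by (rule power_int_add[symmetric]) (simp add: assms(2))
    then show ?thesis unfolding e .
  qed
  have 3: "y powi (int c - int (r - i)) = y ^ c * inverse y ^ (r - i)"
    using assms(2) by (simp add: power_int_diff power_inverse divide_inverse)
  show ?thesis unfolding mult.assoc[of _ "y powi (int c + int i - int n)"] 2 3 1
    by (simp add: power_mult_distrib algebra_simps)
qed

lemma card_Delta_fiber: "1 \<le> i \<Longrightarrow> card {j. (i, j) \<in> Delta r} = r - i"
proof -
  assume "1 \<le> i"
  then have "{j. (i, j) \<in> Delta r} = {Suc i..r}" unfolding Delta_def by auto
  then show ?thesis by simp
qed


lemma prod_pair_distrib: "(\<Prod>(i, j)\<in>I. f i j * g i j) = (\<Prod>(i, j)\<in>I. f i j) * (\<Prod>(i, j)\<in>I. g i j)"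
  by (simp add: case_prod_beta prod.distrib)

theorem lemma6p1:
  fixes k r :: nat and lam :: "nat \<Rightarrow> nat" and \<beta> :: "'a::field_char_0" and t :: "nat \<Rightarrow> 'a"
  assumes "is_partition_of_length lam r"
    and "k_strict k lam"
    and "\<forall>i. 1 \<le> i \<and> i \<le> r \<longrightarrow> t i \<noteq> 0"
    and "\<forall>i. 1 \<le> i \<and> i \<le> r \<longrightarrow> 1 + \<beta> * t i \<noteq> 0"
    and "\<forall>i j. 1 \<le> i \<and> i < j \<and> j \<le> r \<longrightarrow> 1 - t i / tbar \<beta> (t j) \<noteq> 0"
  shows "(\<Prod>i\<in>{1..r}. t i ^ lam i)
           * (\<Prod>(i, j)\<in>Delta r. 1 - tbar \<beta> (t i) / tbar \<beta> (t j))
           / (\<Prod>(i, j)\<in>Cset k lam r. 1 - t i / tbar \<beta> (t j))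
         = (\<Sum>I\<in>Pow (Dset k lam r). pfaffian (rprime r) (LambdaI \<beta> t lam r I))"
proof -
  have h3: "\<forall>i. 1 \<le> i \<and> i \<le> r \<longrightarrow> t i \<noteq> 0" using assms(3) .
  have h4: "\<forall>i. 1 \<le> i \<and> i \<le> r \<longrightarrow> 1 + \<beta> * t i \<noteq> 0" using assms(4) .
  have h5: "\<forall>i j. 1 \<le> i \<and> i < j \<and> j \<le> r \<longrightarrow> 1 - t i / tbar \<beta> (t j) \<noteq> 0" using assms(5) .
  define n where "n = rprime r"
  define u where "u i = 1 + \<beta> * t i" for i
  define M where "M i j = (t j - t i) / (t i + t j + \<beta> * t i * t j)" for i j
  define B where "B i j = 1 - t i / tbar \<beta> (t j)" for i j
  define g where "g i j = t i * (u j * inverse (t j))" for i j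
  define T where "T = (\<Prod>i\<in>{1..r}. t i ^ lam i)"
  define PM where "PM = (\<Prod>(i, j)\<in>Delta r. M i j)"
  define E where "E = (\<Prod>i\<in>{1..r}. u i powi (int n - int r))"
  define SI where "SI I = (\<Prod>i\<in>{1..r}. t i powi (int (lam i) + d_I I i) * u i powi (int (c_I I i) + int i - int n))" for I
  let ?C = "Cset k lam r" and ?D = "Dset k lam r"
  have DeltaS: "Delta r \<subseteq> {1..r} \<times> {1..r}" unfolding Delta_def by auto
  have finD: "finite (Delta r)" using DeltaS by (rule finite_subset) simp
  have CD: "?C \<subseteq> Delta r" unfolding Cset_def by auto
  have DD: "?D = Delta r - ?C" unfolding Dset_def ..
  have inD: "1 \<le> i \<and> i < j \<and> j \<le> r" if "(i, j) \<in> Delta r" for i j using that unfolding Delta_def by auto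
  have Dnz: "t i + t j + \<beta> * t i * t j \<noteq> 0" if "1 \<le> i" "i < j" "j \<le> r" for i j
  proof -
    have "t j \<noteq> 0" "t i \<noteq> 0" "1 + \<beta> * t i \<noteq> 0" "1 + \<beta> * t j \<noteq> 0" using h3 h4 that by auto
    moreover have "(t i + t j + \<beta> * t i * t j) / t j = 1 - t i / tbar \<beta> (t j)"
      unfolding tbar_def using calculation by (simp add: field_simps)
    moreover have "1 - t i / tbar \<beta> (t j) \<noteq> 0" using h5 that by blast
    ultimately have "(t i + t j + \<beta> * t i * t j) / t j \<noteq> 0" by simp
    then show ?thesis by auto
  qed
  have Bnz: "B i j \<noteq> 0" if "(i, j) \<in> Delta r" for i j using h5 inD[OF that] unfolding B_def by auto
  have AB: "1 - tbar \<beta> (t i) / tbar \<beta> (t j) = B i j * (M i j * inverse (u i))" if "(i, j) \<in> Delta r" for i j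
  proof -
    have ij: "1 \<le> i" "i < j" "j \<le> r" using inD[OF that] by auto
    show ?thesis unfolding B_def M_def u_def
      using ratio_lemma(1)[of "t i" "t j" \<beta>] h3 h4 ij Dnz[OF ij] by (simp add: divide_inverse)
  qed
  have Bg: "B i j = g i j + 1" if "(i, j) \<in> Delta r" for i j
  proof -
    have ij: "1 \<le> i" "i < j" "j \<le> r" using inD[OF that] by auto
    have "t j \<noteq> 0" "u j \<noteq> 0" using h3 h4 ij unfolding u_def by auto
    then show ?thesis unfolding B_def g_def tbar_def u_def by (simp add: field_simps)
  qed
  have prodA: "(\<Prod>(i, j)\<in>Delta r. 1 - tbar \<beta> (t i) / tbar \<beta> (t j))
      = (\<Prod>(i, j)\<in>Delta r. B i j) * (\<Prod>(i, j)\<in>Delta r. M i j * inverse (u i))"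
  proof -
    have "(\<Prod>(i, j)\<in>Delta r. 1 - tbar \<beta> (t i) / tbar \<beta> (t j)) = (\<Prod>(i, j)\<in>Delta r. B i j * (M i j * inverse (u i)))"
      using AB by (intro prod.cong) auto
    then show ?thesis by (simp add: prod_pair_distrib)
  qed
  have prodB: "(\<Prod>(i, j)\<in>Delta r. B i j) = (\<Prod>(i, j)\<in>?D. B i j) * (\<Prod>(i, j)\<in>?C. B i j)"
    unfolding DD by (rule prod.subset_diff[OF CD finD])
  have Cnz: "(\<Prod>(i, j)\<in>?C. B i j) \<noteq> 0"
  proof -
    have "finite ?C" using finD CD by (rule finite_subset[rotated])
    moreover have "\<forall>p\<in>?C. (case p of (i, j) \<Rightarrow> B i j) \<noteq> 0" using Bnz CD by auto
    ultimately show ?thesis by (simp add: prod_zero_iff)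
  qed
  have Cfix: "(\<Prod>(i, j)\<in>?C. 1 - t i / tbar \<beta> (t j)) = (\<Prod>(i, j)\<in>?C. B i j)" unfolding B_def ..
  have finDs: "finite ?D" unfolding DD using finD by simp
  have DsD: "?D \<subseteq> Delta r" unfolding DD by auto
  have expand: "(\<Prod>(i, j)\<in>?D. B i j) = (\<Sum>I\<in>Pow ?D. (\<Prod>(i, j)\<in>I. g i j))"
  proof -
    have "(\<Prod>(i, j)\<in>?D. B i j) = (\<Prod>p\<in>?D. (case p of (i, j) \<Rightarrow> g i j) + 1)"
      using Bg DsD by (intro prod.cong) auto
    also have "\<dots> = (\<Sum>X\<in>Pow ?D. (\<Prod>p\<in>X. case p of (i, j) \<Rightarrow> g i j) * (\<Prod>p\<in>?D - X. 1))"
      by (rule prod_add[OF finDs])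
    finally show ?thesis by simp
  qed
  have LHS: "(\<Prod>i\<in>{1..r}. t i ^ lam i) * (\<Prod>(i, j)\<in>Delta r. 1 - tbar \<beta> (t i) / tbar \<beta> (t j))
           / (\<Prod>(i, j)\<in>?C. 1 - t i / tbar \<beta> (t j))
       = (\<Sum>I\<in>Pow ?D. T * (\<Prod>(i, j)\<in>I. g i j) * (\<Prod>(i, j)\<in>Delta r. M i j * inverse (u i)))"
  proof -
    define X where "X = (\<Prod>(i, j)\<in>?C. B i j)"
    define P where "P = (\<Prod>(i, j)\<in>Delta r. M i j * inverse (u i))"
    define S where "S = (\<Sum>I\<in>Pow ?D. (\<Prod>(i, j)\<in>I. g i j))"
    have X: "X \<noteq> 0" using Cnz unfolding X_def .
    have "(\<Prod>i\<in>{1..r}. t i ^ lam i) * (\<Prod>(i, j)\<in>Delta r. 1 - tbar \<beta> (t i) / tbar \<beta> (t j))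
           / (\<Prod>(i, j)\<in>?C. 1 - t i / tbar \<beta> (t j)) = T * (S * X * P) / X"
      unfolding prodA prodB Cfix expand T_def[symmetric] X_def[symmetric] P_def[symmetric] S_def[symmetric] ..
    also have "\<dots> = T * S * P" using X by (simp add: field_simps)
    also have "\<dots> = (\<Sum>I\<in>Pow ?D. T * (\<Prod>(i, j)\<in>I. g i j) * P)"
      unfolding S_def by (simp add: sum_distrib_left sum_distrib_right)
    finally show ?thesis unfolding P_def .
  qed
  have perI: "T * (\<Prod>(i, j)\<in>I. g i j) * (\<Prod>(i, j)\<in>Delta r. M i j * inverse (u i)) = SI I * PM * E"
    if I: "I \<subseteq> ?D" for I
  proof -
    have IS: "I \<subseteq> Delta r" using I DsD by auto
    have finI: "finite I" using finD IS finite_subset by auto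
    have fI: "fst ` I \<subseteq> {1..r}" "snd ` I \<subseteq> {1..r}" using IS DeltaS by auto
    have fD: "fst ` Delta r \<subseteq> {1..r}" using DeltaS by auto
    have g1: "(\<Prod>(i, j)\<in>I. g i j) = (\<Prod>i\<in>{1..r}. t i ^ a_I I i) * (\<Prod>j\<in>{1..r}. (u j * inverse (t j)) ^ c_I I j)"
    proof -
      have f1: "(\<Prod>(i, j)\<in>I. t i) = (\<Prod>i\<in>{1..r}. t i ^ card {j. (i, j) \<in> I})"
        by (rule prod_fst_fiber[OF finI _ fI(1)]) simp
      have f2: "(\<Prod>(i, j)\<in>I. u j * inverse (t j)) = (\<Prod>j\<in>{1..r}. (u j * inverse (t j)) ^ card {i. (i, j) \<in> I})"
        by (rule prod_snd_fiber[OF finI _ fI(2)]) simp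
      have "(\<Prod>(i, j)\<in>I. g i j) = (\<Prod>(i, j)\<in>I. t i) * (\<Prod>(i, j)\<in>I. u j * inverse (t j))"
        unfolding g_def by (rule prod_pair_distrib)
      then show ?thesis unfolding f1 f2 a_I_def c_I_def .
    qed
    have g2: "(\<Prod>(i, j)\<in>Delta r. M i j * inverse (u i)) = PM * (\<Prod>i\<in>{1..r}. inverse (u i) ^ (r - i))"
    proof -
      have "(\<Prod>(i, j)\<in>Delta r. inverse (u i)) = (\<Prod>i\<in>{1..r}. inverse (u i) ^ card {j. (i, j) \<in> Delta r})"
        using prod_fst_fiber[OF finD _ fD, of "\<lambda>i. inverse (u i)"] by simp
      also have "\<dots> = (\<Prod>i\<in>{1..r}. inverse (u i) ^ (r - i))"
        by (rule prod.cong[OF refl]) (simp add: card_Delta_fiber)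
      finally show ?thesis unfolding prod_pair_distrib PM_def by simp
    qed
    have "T * (\<Prod>(i, j)\<in>I. g i j) * (\<Prod>(i, j)\<in>Delta r. M i j * inverse (u i))
      = (\<Prod>i\<in>{1..r}. t i ^ lam i * t i ^ a_I I i * (u i * inverse (t i)) ^ c_I I i * inverse (u i) ^ (r - i)) * PM"
      unfolding g1 g2 T_def by (simp add: prod.distrib algebra_simps)
    also have "(\<Prod>i\<in>{1..r}. t i ^ lam i * t i ^ a_I I i * (u i * inverse (t i)) ^ c_I I i * inverse (u i) ^ (r - i))
      = (\<Prod>i\<in>{1..r}. t i powi (int (lam i) + d_I I i) * u i powi (int (c_I I i) + int i - int n) * u i powi (int n - int r))"
    proof (rule prod.cong[OF refl])
      fix i assume i: "i \<in> {1..r}"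
      have "t i \<noteq> 0" "u i \<noteq> 0" using h3 h4 i unfolding u_def by auto
      then show "t i ^ lam i * t i ^ a_I I i * (u i * inverse (t i)) ^ c_I I i * inverse (u i) ^ (r - i)
        = t i powi (int (lam i) + d_I I i) * u i powi (int (c_I I i) + int i - int n) * u i powi (int n - int r)"
        using per_i[of "t i" "u i" i r "lam i" "a_I I i" "c_I I i" n] i unfolding d_I_def by simp
    qed
    also have "\<dots> = SI I * E" unfolding SI_def E_def by (simp add: prod.distrib)
    finally show ?thesis by (simp add: algebra_simps)
  qed
  have RHS: "pfaffian (rprime r) (LambdaI \<beta> t lam r I) = SI I * PM * E" for I
    using main_rhs[OF h3 h4 h5, of lam I] unfolding SI_def PM_def E_def M_def u_def n_def .
  show ?thesis unfolding LHS RHS using perI by (intro sum.cong) auto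
qed


end
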